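(* Let $s>0$, let $\mathcal{G}=\{g_x\}_{x\in\mathbb{Z}}$ be an $\mathcal{A}^1_s$-self-localized frame for $\mathcal{H}$ with canonical dual $\tilde{\mathcal{G}}=\{\tilde g_x\}$, and write $\mathcal{H}^p=\mathcal{H}^p(\mathcal{G},\tilde{\mathcal{G}})$. Let $\mathcal{F}=\{f_n\}_{n\in\mathbb{Z}}$ be a frame for $\mathcal{H}$ with lower frame bound $A$, and let $\mathcal{E}=\{e_n\}_{n\in\mathbb{Z}}\subset\mathcal{H}$ satisfy $\|e_n-f_n\|_{\mathcal{H}^p}\le\varepsilon_n$ for all $n$ and all $1\le p\le\infty$, where $\sup_n\varepsilon_n\le\varepsilon$. Consider the statements (i) $\sum_{n\in\mathbb{Z}}\|e_n-f_n\|_{\mathcal{H}^\infty}\le\varepsilon$; (ii) $\sup_{x\in\mathbb{Z}}\sum_{n\in\mathbb{Z}}|\langle e_n-f_n,\tilde g_x\rangle|\le\varepsilon$; (iii) $\left\|\sum_{n\in F}c_n(e_n-f_n)\right\|\le\sqrt{\|A(\mathcal{G},\mathcal{G})\|_{\mathcal{A}^1}}\,\varepsilon\left(\sum_{n\in F}|c_n|^2\right)^{1/2}$ for every finite set $F\subset\mathbb{Z}$ and all scalars $(c_n)_{n\in F}$. Then (i) implies (ii) and (ii) implies (iii). Moreover, if $\varepsilon>0$ is small enough (for instance $\sqrt{\|A(\mathcal{G},\mathcal{G})\|_{\mathcal{A}^1}}\,\varepsilon<\sqrt{A}$) and one of (i)–(iii) holds, then $\mathcal{E}$ is a frame for $\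mathcal{H}$.
   Context: A sequence $\{h_n\}_{n\in\mathbb{Z}}$ in a separable Hilbert space $\mathcal{H}$ is a frame with bounds $0<A\le B<\infty$ if $A\|f\|^2\le\sum_n|\langle f,h_n\rangle|^2\le B\|f\|^2$ for all $f\in\mathcal{H}$; its frame operator $Sf=\sum_n\langle f,h_n\rangle h_n$ is boundedly invertible and $\{S^{-1}h_n\}$ is the canonical dual frame. For $s\ge0$, $v_s(x)=(1+|x|)^s$, and the Schur algebra $\mathcal{A}^1_s$ is the set of matrices $M=(m_{kl})_{k,l\in\mathbb{Z}}$ with $\|M\|_{\mathcal{A}^1_s}:=\max\{\sup_k\sum_l|m_{kl}|v_s(k-l),\ \sup_l\sum_k|m_{kl}|v_s(k-l)\}<\infty$; $\mathcal{A}^1:=\mathcal{A}^1_0$. The Gramian $A(\mathcal{G},\mathcal{G})$ has entries $\langle g_x,g_y\rangle$; $\mathcal{G}$ is $\mathcal{A}^1_s$-self-localized if $A(\mathcal{G},\mathcal{G})\in\mathcal{A}^1_s$. Spaces $\mathcal{H}^p(\mathcal{G},\tilde{\mathcal{G}})$: for $1\le p\le2$, $\mathcal{H}^p=\{f\in\mathcal{H}: f=\sum_x\langle f,\tilde g_x\rangle g_x,\ (\langle f,\tilde g_x\rangle)_x\in\ell^p\}$ with norm $\|f\|_{\mathcal{H}^p}=\|(\langle f,\tilde g_x\rangle)_x\|_{\ell^p}$; for $2<p<\infty$, $\mathcal{H}^p$ is the completion of the finite linear combinations of elements of $\mathcal{G}$ in this norm; $\mathcal{H}^\infty:=(\mathcal{H}^1)'$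 with norm $\|f\|_{\mathcal{H}^\infty}=\sup_x|\langle f,\tilde g_x\rangle|$. In particular for $h\in\mathcal{H}$, $\|h\|_{\mathcal{H}^1}=\sum_x|\langle h,\tilde g_x\rangle|$ and $\|h\|_{\mathcal{H}^\infty}=\sup_x|\langle h,\tilde g_x\rangle|$. *)

theory Defs
  imports "HOL-Analysis.Analysis"
begin

text \<open>HOL-Analysis only provides real inner product spaces. A complex Hilbert space
is modelled as a Banach space (over the reals) with a compatible complex scalar
multiplication and an inner product, linear in the first argument, conjugate
symmetric, and inducing the norm.\<close>

class chilbert = banach +
  fixes scaleC :: "complex \<Rightarrow> 'a \<Rightarrow> 'a" (infixr \<open>*\<^sub>C\<close> 75)
    and cinner :: "'a \<Rightarrow> 'a \<Rightarrow> complex"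
  assumes scaleC_add_right: "a *\<^sub>C (x + y) = a *\<^sub>C x + a *\<^sub>C y"
    and scaleC_add_left: "(a + b) *\<^sub>C x = a *\<^sub>C x + b *\<^sub>C x"
    and scaleC_scaleC: "a *\<^sub>C (b *\<^sub>C x) = (a * b) *\<^sub>C x"
    and scaleC_one: "1 *\<^sub>C x = x"
    and scaleR_scaleC: "scaleR r x = complex_of_real r *\<^sub>C x"
    and cinner_add_left: "cinner (x + y) z = cinner x z + cinner y z"
    and cinner_scaleC_left: "cinner (a *\<^sub>C x) y = a * cinner x y"
    and cinner_commute: "cinner x y = cnj (cinner y x)"
    and cinner_self: "cinner x x = complex_of_real ((norm x)\<^sup>2)"

definition frame :: "(int \<Rightarrow> 'a::chilbert) \<Rightarrow> real \<Rightarrow> real \<Rightarrow> bool" where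
  "frame h A B \<longleftrightarrow> 0 < A \<and> A \<le> B \<and>
     (\<forall>f. (\<lambda>n. (cmod (cinner f (h n)))\<^sup>2) summable_on UNIV \<and>
          A * (norm f)\<^sup>2 \<le> (\<Sum>\<^sub>\<infinity>n. (cmod (cinner f (h n)))\<^sup>2) \<and>
          (\<Sum>\<^sub>\<infinity>n. (cmod (cinner f (h n)))\<^sup>2) \<le> B * (norm f)\<^sup>2)"

definition is_frame :: "(int \<Rightarrow> 'a::chilbert) \<Rightarrow> bool" where
  "is_frame h \<longleftrightarrow> (\<exists>A B. frame h A B)"

definition frame_op :: "(int \<Rightarrow> 'a::chilbert) \<Rightarrow> 'a \<Rightarrow> 'a" where
  "frame_op h f = (\<Sum>\<^sub>\<infinity>n. cinner f (h n) *\<^sub>C h n)"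

definition canonical_dual :: "(int \<Rightarrow> 'a::chilbert) \<Rightarrow> int \<Rightarrow> 'a" where
  "canonical_dual h x = (THE y. frame_op h y = h x)"

definition weight :: "real \<Rightarrow> int \<Rightarrow> real" where
  "weight s x = (1 + real_of_int \<bar>x\<bar>) powr s"

definition in_schur :: "real \<Rightarrow> (int \<Rightarrow> int \<Rightarrow> complex) \<Rightarrow> bool" where
  "in_schur s M \<longleftrightarrow>
     (\<forall>k. (\<lambda>l. cmod (M k l) * weight s (k - l)) summable_on UNIV) \<and>
     (\<forall>l. (\<lambda>k. cmod (M k l) * weight s (k - l)) summable_on UNIV) \<and>
     bdd_above (range (\<lambda>k. \<Sum>\<^sub>\<infinity>l. cmod (M k l) * weight s (k - l))) \<and>
     bdd_above (range (\<lambda>l. \<Sum>\<^sub>\<infinity>k. cmod (M k l) * weight s (k - l)))"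

definition schur_norm :: "real \<Rightarrow> (int \<Rightarrow> int \<Rightarrow> complex) \<Rightarrow> real" where
  "schur_norm s M = max (SUP k. \<Sum>\<^sub>\<infinity>l. cmod (M k l) * weight s (k - l))
                        (SUP l. \<Sum>\<^sub>\<infinity>k. cmod (M k l) * weight s (k - l))"

definition gramian :: "(int \<Rightarrow> 'a::chilbert) \<Rightarrow> int \<Rightarrow> int \<Rightarrow> complex" where
  "gramian g x y = cinner (g x) (g y)"

definition Hp_norm_le :: "(int \<Rightarrow> 'a::chilbert) \<Rightarrow> real \<Rightarrow> 'a \<Rightarrow> real \<Rightarrow> bool" where
  "Hp_norm_le g p h r \<longleftrightarrow>
     (\<lambda>x. cmod (cinner h (canonical_dual g x)) powr p) summable_on UNIV \<and>
     (\<Sum>\<^sub>\<infinity>x. cmod (cinner h (canonical_dual g x)) powr p) powr (1 / p) \<le> r"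

definition Hinf_norm :: "(int \<Rightarrow> 'a::chilbert) \<Rightarrow> 'a \<Rightarrow> real" where
  "Hinf_norm g h = (SUP x. cmod (cinner h (canonical_dual g x)))"

end

theory Submission
  imports Defs
begin



lemma scaleC_zero_left[simp]: "(0::complex) *\<^sub>C (x::'a::chilbert) = 0"
proof -
  have "(0::complex) *\<^sub>C x = 0 *\<^sub>C x + 0 *\<^sub>C x" using scaleC_add_left[of 0 0 x] by simp
  then show ?thesis by simp
qed

lemma scaleC_neg_one: "(-1::complex) *\<^sub>C (x::'a::chilbert) = - x"
  using scaleR_scaleC[of "-1" x] by simp

lemma scaleC_zero_right[simp]: "a *\<^sub>C (0::'a::chilbert) = 0"
proof -
  have "a *\<^sub>C (0::'a) = a *\<^sub>C 0 + a *\<^sub>C 0" using scaleC_add_right[of a 0 0] by simp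
  then show ?thesis by simp
qed

lemma scaleC_minus_right: "a *\<^sub>C (- x::'a::chilbert) = - (a *\<^sub>C x)"
proof -
  have "a *\<^sub>C (- x) = a *\<^sub>C ((-1) *\<^sub>C x)" by (simp add: scaleC_neg_one)
  also have "\<dots> = (-1) *\<^sub>C (a *\<^sub>C x)" by (simp add: scaleC_scaleC)
  finally show ?thesis by (simp add: scaleC_neg_one)
qed

lemma scaleC_diff_right: "a *\<^sub>C ((x::'a::chilbert) - y) = a *\<^sub>C x - a *\<^sub>C y"
  by (simp only: diff_conv_add_uminus scaleC_add_right scaleC_minus_right)

lemma scaleC_sum_right: "a *\<^sub>C (\<Sum>i\<in>F. (f i::'a::chilbert)) = (\<Sum>i\<in>F. a *\<^sub>C f i)"
  by (induction F rule: infinite_finite_induct) (auto simp: scaleC_add_right)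

lemma scaleC_scaleR_comm: "a *\<^sub>C (r *\<^sub>R (x::'a::chilbert)) = r *\<^sub>R (a *\<^sub>C x)"
  by (simp add: scaleR_scaleC scaleC_scaleC mult.commute)

lemma cinner_zero_left[simp]: "cinner (0::'a::chilbert) y = 0"
proof -
  have "cinner (0::'a) y = cinner 0 y + cinner 0 y" using cinner_add_left[of 0 0 y] by simp
  then show ?thesis by simp
qed

lemma cinner_minus_left: "cinner (- x::'a::chilbert) y = - cinner x y"
proof -
  have "cinner (- x) y = cinner ((-1) *\<^sub>C x) y" by (simp add: scaleC_neg_one)
  then show ?thesis by (simp add: cinner_scaleC_left)
qed

lemma cinner_diff_left: "cinner ((x::'a::chilbert) - z) y = cinner x y - cinner z y"
  by (simp only: diff_conv_add_uminus cinner_add_left cinner_minus_left)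

lemma cinner_sum_left: "cinner (\<Sum>i\<in>F. (f i::'a::chilbert)) y = (\<Sum>i\<in>F. cinner (f i) y)"
  by (induction F rule: infinite_finite_induct) (auto simp: cinner_add_left)

lemma cinner_scaleR_left: "cinner (r *\<^sub>R (x::'a::chilbert)) y = of_real r * cinner x y"
  by (simp add: scaleR_scaleC cinner_scaleC_left)

lemma cinner_zero_right[simp]: "cinner (y::'a::chilbert) 0 = 0"
  by (subst cinner_commute) simp

lemma cinner_add_right: "cinner (z::'a::chilbert) (x + y) = cinner z x + cinner z y"
  by (subst (1 2 3) cinner_commute) (simp add: cinner_add_left)

lemma cinner_scaleC_right: "cinner (y::'a::chilbert) (a *\<^sub>C x) = cnj a * cinner y x"
  by (subst (1 2) cinner_commute) (simp add: cinner_scaleC_left)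

lemma cinner_diff_right: "cinner (y::'a::chilbert) (x - z) = cinner y x - cinner y z"
  by (subst (1 2 3) cinner_commute) (simp add: cinner_diff_left)

lemma cinner_sum_right: "cinner y (\<Sum>i\<in>F. (f i::'a::chilbert)) = (\<Sum>i\<in>F. cinner y (f i))"
  by (induction F rule: infinite_finite_induct) (auto simp: cinner_add_right)

lemma cinner_self_Re: "Re (cinner (x::'a::chilbert) x) = (norm x)\<^sup>2"
  by (simp add: cinner_self)


lemma quad_disc:
  fixes a b c :: real
  assumes H: "\<And>t. a - 2*t*b + t^2*b*c \<ge> 0" and b0: "b \<ge> 0" and c0: "c \<ge> 0"
  shows "b \<le> a * c"
proof (cases "b = 0")
  case True then show ?thesis using H[of 0] c0 by simp
next
  case bne: False
  have a0: "a \<ge> 0" using H[of 0] by simp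
  show ?thesis
  proof (cases "c = 0")
    case True
    have h1: "a - 2*((a/b)+1)*b + ((a/b)+1)^2*b*c \<ge> 0" by (rule H)
    have h2: "2*((a/b)+1)*b = 2*a + 2*b" using bne by (simp add: field_simps)
    have "a - (2*a + 2*b) \<ge> 0" using h1 h2 True by simp
    then show ?thesis using b0 bne a0 by linarith
  next
    case False
    have h1: "a - 2*(1/c)*b + (1/c)^2*b*c \<ge> 0" by (rule H)
    have h2: "a - 2*(1/c)*b + (1/c)^2*b*c = (a*c - b)/c" using False
      by (simp add: field_simps power2_eq_square)
    have "(a*c - b)/c \<ge> 0" using h1 h2 by linarith
    then have "a*c - b \<ge> 0" using False c0 by (simp add: zero_le_divide_iff)
    then show ?thesis by linarith
  qed
qed

lemma gen_CS:
  fixes Q :: "'a::chilbert \<Rightarrow> 'a \<Rightarrow> complex"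
  assumes add: "\<And>x y z. Q (x + y) z = Q x z + Q y z"
    and scal: "\<And>a x z. Q (a *\<^sub>C x) z = a * Q x z"
    and herm: "\<And>x y. Q x y = cnj (Q y x)"
    and pos: "\<And>x. Re (Q x x) \<ge> 0"
  shows "(cmod (Q x y))\<^sup>2 \<le> Re (Q x x) * Re (Q y y)"
proof -
  have addr: "Q z (x + y) = Q z x + Q z y" for x y z
  proof -
    have "Q z (x + y) = cnj (Q (x+y) z)" by (rule herm)
    also have "\<dots> = cnj (Q x z) + cnj (Q y z)" by (simp only: add complex_cnj_add)
    also have "\<dots> = Q z x + Q z y" by (simp only: herm[of z x] herm[of z y])
    finally show ?thesis .
  qed
  have scalr: "Q z (a *\<^sub>C x) = cnj a * Q z x" for a x z
  proof -
    have "Q z (a *\<^sub>C x) = cnj (Q (a *\<^sub>C x) z)" by (rule herm)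
    also have "\<dots> = cnj a * cnj (Q x z)" by (simp only: scal complex_cnj_mult)
    also have "\<dots> = cnj a * Q z x" by (simp only: herm[of z x])
    finally show ?thesis .
  qed
  define \<alpha> where "\<alpha> = Q x y"
  define n where "n = (cmod \<alpha>)\<^sup>2"
  have aa: "\<alpha> * cnj \<alpha> = of_real n" unfolding n_def by (rule complex_norm_square[symmetric])
  have aa': "cnj \<alpha> * \<alpha> = of_real n" using aa by (simp only: mult.commute)
  have yx: "Q y x = cnj \<alpha>" unfolding \<alpha>_def by (rule herm)
  have "\<And>t::real. Re (Q x x) - 2*t*n + t^2*n*Re (Q y y) \<ge> 0"
  proof -
    fix t :: real
    define c where "c = - (of_real t * \<alpha>)"
    have cc: "cnj c = - (of_real t * cnj \<alpha>)" unfolding c_def by simp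
    have e0: "Q (x + c *\<^sub>C y) (x + c *\<^sub>C y) = Q x x + cnj c * Q x y + c * Q y x + c * cnj c * Q y y"
      unfolding add addr scal scalr by (simp add: algebra_simps)
    have e1: "cnj c * Q x y = - of_real (t*n)"
      unfolding cc \<alpha>_def[symmetric] by (simp only: mult_minus_left mult.assoc aa' of_real_mult)
    have e2: "c * Q y x = - of_real (t*n)"
      unfolding c_def yx by (simp only: mult_minus_left mult.assoc aa of_real_mult)
    have e3: "c * cnj c = of_real (t^2*n)"
    proof -
      have "c * cnj c = of_real t * of_real t * (\<alpha> * cnj \<alpha>)" unfolding cc c_def by (simp add: algebra_simps)
      then show ?thesis unfolding aa by (simp add: power2_eq_square)
    qed
    have e4: "Q (x + c *\<^sub>C y) (x + c *\<^sub>C y) = Q x x + - of_real (t*n) + - of_real (t*n) + of_real (t^2*n) * Q y y"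
      unfolding e0 e1 e2 e3 by (rule refl)
    have e5: "Re (Q (x + c *\<^sub>C y) (x + c *\<^sub>C y)) = Re (Q x x) - 2*t*n + t^2*n*Re (Q y y)"
      unfolding e4 by simp
    have "Re (Q (x + c *\<^sub>C y) (x + c *\<^sub>C y)) \<ge> 0" by (rule pos)
    then show "Re (Q x x) - 2*t*n + t^2*n*Re (Q y y) \<ge> 0" unfolding e5 .
  qed
  then have "n \<le> Re (Q x x) * Re (Q y y)"
    by (intro quad_disc) (auto simp: pos n_def)
  then show ?thesis by (simp add: \<alpha>_def n_def)
qed

lemma CS: "cmod (cinner (x::'a::chilbert) y) \<le> norm x * norm y"
proof -
  have "(cmod (cinner x y))\<^sup>2 \<le> Re (cinner x x) * Re (cinner y y)"
    by (rule gen_CS[of cinner]) (simp add: cinner_add_left, simp add: cinner_scaleC_left, rule cinner_commute, simp add: cinner_self)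
  also have "\<dots> = (norm x * norm y)\<^sup>2" by (simp add: cinner_self power_mult_distrib)
  finally show ?thesis by (rule power2_le_imp_le) simp
qed





lemma norm_scaleC: "norm (a *\<^sub>C (x::'a::chilbert)) = cmod a * norm x"
proof -
  have "(norm (a *\<^sub>C x))\<^sup>2 = Re (cinner (a *\<^sub>C x) (a *\<^sub>C x))" by (simp add: cinner_self)
  also have "\<dots> = Re (a * cnj a * cinner x x)" by (simp add: cinner_scaleC_left cinner_scaleC_right mult.assoc mult.left_commute)
  also have "\<dots> = (cmod a * norm x)\<^sup>2"
    by (simp add: cinner_self complex_norm_square[symmetric] power_mult_distrib del: of_real_power)
  finally show ?thesis by (simp add: power2_eq_iff_nonneg)
qed

lemma cinner_scaleR_right: "cinner (y::'a::chilbert) (r *\<^sub>R x) = of_real r * cinner y x"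
  by (simp add: scaleR_scaleC cinner_scaleC_right)

lemma bl_cinner_left: "bounded_linear (\<lambda>x::'a::chilbert. cinner x z)"
proof (rule bounded_linear_intro[where K="norm z"])
  show "cinner (x + y) z = cinner x z + cinner y z" for x y by (rule cinner_add_left)
  show "cinner (r *\<^sub>R x) z = r *\<^sub>R cinner x z" for r x by (simp add: cinner_scaleR_left scaleR_conv_of_real)
  show "norm (cinner x z) \<le> norm x * norm z" for x by (simp add: CS)
qed

lemma bl_cinner_right: "bounded_linear (\<lambda>x::'a::chilbert. cinner z x)"
proof (rule bounded_linear_intro[where K="norm z"])
  show "cinner z (x + y) = cinner z x + cinner z y" for x y by (rule cinner_add_right)
  show "cinner z (r *\<^sub>R x) = r *\<^sub>R cinner z x" for r x by (simp add: cinner_scaleR_right scaleR_conv_of_real)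
  show "norm (cinner z x) \<le> norm x * norm z" for x using CS[of z x] by (simp add: mult.commute)
qed

lemma bl_scaleC: "bounded_linear (\<lambda>x::'a::chilbert. a *\<^sub>C x)"
proof (rule bounded_linear_intro[where K="cmod a"])
  show "a *\<^sub>C (x + y) = a *\<^sub>C x + a *\<^sub>C y" for x y by (rule scaleC_add_right)
  show "a *\<^sub>C (r *\<^sub>R x) = r *\<^sub>R (a *\<^sub>C x)" for r x by (rule scaleC_scaleR_comm)
  show "norm (a *\<^sub>C x) \<le> norm x * cmod a" for x by (simp add: norm_scaleC mult.commute)
qed

lemma cinner_ext: assumes "\<And>z. cinner (x::'a::chilbert) z = cinner y z" shows "x = y"
proof -
  have "cinner (x - y) (x - y) = 0" by (simp add: cinner_diff_left assms)
  then have "norm (x - y) = 0" by (simp add: cinner_self)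
  then show ?thesis by simp
qed

lemma has_sum_cinner_left:
  assumes "(f has_sum S) A" shows "((\<lambda>i. cinner (f i) (z::'a::chilbert)) has_sum cinner S z) A"
  using has_sum_bounded_linear[OF bl_cinner_left assms] .

lemma has_sum_cinner_right:
  assumes "(f has_sum S) A" shows "((\<lambda>i. cinner (z::'a::chilbert) (f i)) has_sum cinner z S) A"
  using has_sum_bounded_linear[OF bl_cinner_right assms] .

lemma summable_on_cauchy_bound:
  fixes f :: "'i \<Rightarrow> 'b::banach" and w :: "'i \<Rightarrow> real"
  assumes ws: "w summable_on A" and wpos: "\<And>i. i \<in> A \<Longrightarrow> w i \<ge> 0" and K0: "K \<ge> 0"
    and bnd: "\<And>F. finite F \<Longrightarrow> F \<subseteq> A \<Longrightarrow> norm (sum f F) \<le> K * sqrt (sum w F)"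
  shows "f summable_on A"
proof -
  from ws obtain L where lim: \<open>(sum w \<longlongrightarrow> L) (finite_subsets_at_top A)\<close>
    unfolding has_sum_def summable_on_def by blast
  have \<open>\<exists>P. eventually P (finite_subsets_at_top A) \<and>
              (\<forall>F F'. P F \<and> P F' \<longrightarrow> dist (sum f F) (sum f F') < e)\<close> if \<open>e>0\<close> for e
  proof -
    define d P where \<open>d = (e/(2*(K+1)))\<^sup>2/2\<close> and \<open>P F \<longleftrightarrow> finite F \<and> F \<subseteq> A \<and> dist (sum w F) L < d\<close> for F
    have \<open>d > 0\<close>
      unfolding d_def using that K0 by simp
    have sd: "K * sqrt (2*d) < e/2"
    proof -
      have "sqrt (2*d) = e/(2*(K+1))" using that K0 by (simp add: d_def)
      moreover have "K * (e/(2*(K+1))) < e/2" using that K0 by (simp add: field_simps)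
      ultimately show ?thesis by simp
    qed
    have ev_P: \<open>eventually P (finite_subsets_at_top A)\<close>
      using lim
      by (auto simp add: P_def[abs_def] \<open>0 < d\<close> eventually_conj_iff eventually_finite_subsets_at_top_weakI tendsto_iff)
    moreover have \<open>dist (sum f F1) (sum f F2) < e\<close> if \<open>P F1\<close> and \<open>P F2\<close> for F1 F2
    proof -
      from ev_P
      obtain F' where \<open>finite F'\<close> and \<open>F' \<subseteq> A\<close> and P_sup_F': \<open>finite F \<and> F \<supseteq> F' \<and> F \<subseteq> A \<Longrightarrow> P F\<close> for F
        by atomize_elim (simp add: eventually_finite_subsets_at_top)
      define F where \<open>F = F' \<union> F1 \<union> F2\<close>
      have \<open>finite F\<close> and \<open>F \<subseteq> A\<close>
        using F_def P_def[abs_def] that \<open>finite F'\<close> \<open>F' \<subseteq> A\<close> by auto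
      have dist_F: \<open>dist (sum w F) L < d\<close>
        by (metis F_def \<open>F \<subseteq> A\<close> P_def P_sup_F' \<open>finite F\<close> le_supE order_refl)
      have dist_F_subset: \<open>dist (sum f F) (sum f F') < e/2\<close> if F': \<open>F' \<subseteq> F\<close> \<open>P F'\<close> for F'
      proof -
        have \<open>dist (sum f F) (sum f F') = norm (sum f (F-F'))\<close>
          unfolding dist_norm using \<open>finite F\<close> F' by (subst sum_diff) auto
        also have \<open>\<dots> \<le> K * sqrt (sum w (F-F'))\<close>
          using bnd \<open>finite F\<close> \<open>F \<subseteq> A\<close> by auto
        also have \<open>sum w (F-F') = sum w F - sum w F'\<close>
          using \<open>finite F\<close> F' by (subst sum_diff) auto
        also have \<open>K * sqrt (sum w F - sum w F') \<le> K * sqrt (2*d)\<close>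
          using dist_F F' K0 unfolding P_def dist_real_def
          by (intro mult_left_mono real_sqrt_le_mono) auto
        also have \<open>\<dots> < e/2\<close> by (rule sd)
        finally show ?thesis .
      qed
      have \<open>dist (sum f F1) (sum f F2) \<le> dist (sum f F) (sum f F1) + dist (sum f F) (sum f F2)\<close>
        by (rule dist_triangle3)
      also have \<open>\<dots> < e/2 + e/2\<close>
        by (intro add_strict_mono dist_F_subset that) (auto simp: F_def)
      finally show \<open>dist (sum f F1) (sum f F2) < e\<close> by simp
    qed
    ultimately show ?thesis
      by blast
  qed
  then have \<open>cauchy_filter (filtermap (sum f) (finite_subsets_at_top A))\<close>
    by (simp add: cauchy_filter_metric_filtermap)
  moreover have "complete (UNIV::'b set)"
    by (meson Cauchy_convergent UNIV_I complete_def convergent_def)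
  ultimately obtain L' where \<open>(sum f \<longlongrightarrow> L') (finite_subsets_at_top A)\<close>
    using complete_uniform[where S=UNIV] by (force simp add: filterlim_def)
  then show ?thesis
    using summable_on_def has_sum_def by blast
qed




context
  fixes g :: "int \<Rightarrow> 'a::chilbert" and A B :: real
  assumes fr: "frame g A B"
begin

lemma fr_A: "A > 0" and fr_AB: "A \<le> B" using fr unfolding frame_def by auto
lemma fr_B: "B > 0" using fr_A fr_AB by simp

lemma fr_summ: "(\<lambda>n. (cmod (cinner y (g n)))\<^sup>2) summable_on UNIV"
  using fr unfolding frame_def by auto
lemma fr_low: "A * (norm y)\<^sup>2 \<le> (\<Sum>\<^sub>\<infinity>n. (cmod (cinner y (g n)))\<^sup>2)"
  using fr unfolding frame_def by auto
lemma fr_up: "(\<Sum>\<^sub>\<infinity>n. (cmod (cinner y (g n)))\<^sup>2) \<le> B * (norm y)\<^sup>2"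
  using fr unfolding frame_def by auto

lemma fr_synth:
  assumes "finite F"
  shows "norm (\<Sum>n\<in>F. c n *\<^sub>C g n) \<le> sqrt B * sqrt (\<Sum>n\<in>F. (cmod (c n))\<^sup>2)"
proof -
  define v where "v = (\<Sum>n\<in>F. c n *\<^sub>C g n)"
  have "(norm v)\<^sup>2 = Re (cinner v v)" by (simp add: cinner_self)
  also have "cinner v v = (\<Sum>n\<in>F. c n * cinner (g n) v)"
  proof -
    have aux: "cinner (\<Sum>n\<in>F. c n *\<^sub>C g n) w = (\<Sum>n\<in>F. c n * cinner (g n) w)" for w
      by (simp add: cinner_sum_left cinner_scaleC_left)
    show ?thesis using aux[of v] unfolding v_def[symmetric] .
  qed
  also have "Re \<dots> \<le> (\<Sum>n\<in>F. \<bar>cmod (c n)\<bar> * \<bar>cmod (cinner v (g n))\<bar>)"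
  proof -
    have "Re (\<Sum>n\<in>F. c n * cinner (g n) v) \<le> cmod (\<Sum>n\<in>F. c n * cinner (g n) v)"
      by (rule complex_Re_le_cmod)
    also have "\<dots> \<le> (\<Sum>n\<in>F. cmod (c n * cinner (g n) v))" by (rule norm_sum)
    also have "\<dots> = (\<Sum>n\<in>F. \<bar>cmod (c n)\<bar> * \<bar>cmod (cinner v (g n))\<bar>)"
      by (intro sum.cong refl) (simp add: norm_mult cinner_commute[of "g _" v])
    finally show ?thesis .
  qed
  also have "\<dots> \<le> L2_set (\<lambda>n. cmod (c n)) F * L2_set (\<lambda>n. cmod (cinner v (g n))) F"
    by (rule L2_set_mult_ineq)
  also have "L2_set (\<lambda>n. cmod (cinner v (g n))) F \<le> sqrt B * norm v"
  proof -
    have "(\<Sum>n\<in>F. (cmod (cinner v (g n)))\<^sup>2) \<le> (\<Sum>\<^sub>\<infinity>n. (cmod (cinner v (g n)))\<^sup>2)"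
      by (rule finite_sum_le_infsum[OF fr_summ assms]) auto
    also have "\<dots> \<le> B * (norm v)\<^sup>2" by (rule fr_up)
    finally have "sqrt (\<Sum>n\<in>F. (cmod (cinner v (g n)))\<^sup>2) \<le> sqrt (B * (norm v)\<^sup>2)"
      by (rule real_sqrt_le_mono)
    then show ?thesis unfolding L2_set_def using fr_B by (simp add: real_sqrt_mult)
  qed
  finally have "(norm v)\<^sup>2 \<le> L2_set (\<lambda>n. cmod (c n)) F * (sqrt B * norm v)"
    by (simp add: mult_left_mono L2_set_nonneg)
  then have "norm v \<le> L2_set (\<lambda>n. cmod (c n)) F * sqrt B"
    using fr_B by (cases "norm v = 0") (auto simp: power2_eq_square mult.assoc[symmetric] L2_set_nonneg)
  then show ?thesis unfolding v_def L2_set_def by (simp add: mult.commute)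
qed

lemma fr_S_summable: "(\<lambda>n. cinner y (g n) *\<^sub>C g n) summable_on UNIV"
  by (rule summable_on_cauchy_bound[where w="\<lambda>n. (cmod (cinner y (g n)))\<^sup>2" and K="sqrt B"])
     (use fr_summ fr_B fr_synth in auto)

lemma fr_S_has_sum: "((\<lambda>n. cinner y (g n) *\<^sub>C g n) has_sum frame_op g y) UNIV"
  unfolding frame_op_def using fr_S_summable by simp

lemma fr_S_inner: "((\<lambda>n. cinner y (g n) * cinner (g n) z) has_sum cinner (frame_op g y) z) UNIV"
  using has_sum_cinner_left[OF fr_S_has_sum, of y z] by (simp add: cinner_scaleC_left)

lemma fr_S_self: "cinner (frame_op g y) y = of_real (\<Sum>\<^sub>\<infinity>n. (cmod (cinner y (g n)))\<^sup>2)"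
proof -
  have "((\<lambda>n. of_real ((cmod (cinner y (g n)))\<^sup>2) :: complex) has_sum of_real (\<Sum>\<^sub>\<infinity>n. (cmod (cinner y (g n)))\<^sup>2)) UNIV"
    by (rule has_sum_of_real) (simp add: fr_summ)
  moreover have "of_real ((cmod (cinner y (g n)))\<^sup>2) = cinner y (g n) * cinner (g n) y" for n
    by (subst cinner_commute[of "g n" y]) (rule complex_norm_square)
  ultimately show ?thesis using fr_S_inner[of y y] has_sum_unique by auto
qed

lemma fr_S_herm: "cinner (frame_op g y) z = cnj (cinner (frame_op g z) y)"
proof -
  have "((\<lambda>n. cnj (cinner z (g n) * cinner (g n) y)) has_sum cnj (cinner (frame_op g z) y)) UNIV"
    by (rule has_sum_cnj_iff[THEN iffD2]) (rule fr_S_inner)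
  moreover have "cnj (cinner z (g n) * cinner (g n) y) = cinner y (g n) * cinner (g n) z" for n
    by (simp add: cinner_commute[of z "g n"] cinner_commute[of "g n" y])
  ultimately show ?thesis using fr_S_inner[of y z] has_sum_unique by auto
qed

lemma fr_S_add: "frame_op g (x + y) = frame_op g x + frame_op g y"
proof (rule cinner_ext)
  fix z
  have "((\<lambda>n. cinner x (g n) * cinner (g n) z + cinner y (g n) * cinner (g n) z) has_sum
          cinner (frame_op g x) z + cinner (frame_op g y) z) UNIV"
    by (intro has_sum_add fr_S_inner)
  moreover have "cinner x (g n) * cinner (g n) z + cinner y (g n) * cinner (g n) z = cinner (x + y) (g n) * cinner (g n) z" for n
    by (simp add: cinner_add_left algebra_simps)
  ultimately show "cinner (frame_op g (x + y)) z = cinner (frame_op g x + frame_op g y) z"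
    using fr_S_inner[of "x+y" z] has_sum_unique by (auto simp: cinner_add_left)
qed

lemma fr_S_scaleC: "frame_op g (a *\<^sub>C x) = a *\<^sub>C frame_op g x"
proof (rule cinner_ext)
  fix z
  have "((\<lambda>n. a * (cinner x (g n) * cinner (g n) z)) has_sum a * cinner (frame_op g x) z) UNIV"
    by (intro has_sum_cmult_right fr_S_inner)
  moreover have "a * (cinner x (g n) * cinner (g n) z) = cinner (a *\<^sub>C x) (g n) * cinner (g n) z" for n
    by (simp add: cinner_scaleC_left)
  ultimately show "cinner (frame_op g (a *\<^sub>C x)) z = cinner (a *\<^sub>C frame_op g x) z"
    using fr_S_inner[of "a *\<^sub>C x" z] has_sum_unique by (auto simp: cinner_scaleC_left)
qed

lemma fr_S_scaleR: "frame_op g (r *\<^sub>R x) = r *\<^sub>R frame_op g x"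
  by (simp add: scaleR_scaleC fr_S_scaleC)

lemma fr_S_diff: "frame_op g (x - y) = frame_op g x - frame_op g y"
  using fr_S_add[of "x - y" y] by (simp add: algebra_simps)

lemma fr_S_Re_low: "A * (norm y)\<^sup>2 \<le> Re (cinner (frame_op g y) y)"
  using fr_low by (simp add: fr_S_self)

lemma fr_S_Re_up: "Re (cinner (frame_op g y) y) \<le> B * (norm y)\<^sup>2"
  using fr_up by (simp add: fr_S_self)

lemma fr_S_inj: assumes "frame_op g x = frame_op g y" shows "x = y"
proof -
  have "frame_op g (x - y) = 0" using assms by (simp add: fr_S_diff)
  then have "A * (norm (x - y))\<^sup>2 \<le> 0" using fr_S_Re_low[of "x - y"] by simp
  then show ?thesis using fr_A by (simp add: mult_le_0_iff)
qed

end



definition Rop :: "(int \<Rightarrow> 'a::chilbert) \<Rightarrow> real \<Rightarrow> 'a \<Rightarrow> 'a" where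
  "Rop g B x = x - (1/B) *\<^sub>R frame_op g x"

context
  fixes g :: "int \<Rightarrow> 'a::chilbert" and A B :: real
  assumes fr: "frame g A B"
begin

lemma R_add: "Rop g B (x + y) = Rop g B x + Rop g B y"
  unfolding Rop_def by (simp add: fr_S_add[OF fr] scaleR_add_right algebra_simps)

lemma R_scaleC: "Rop g B (a *\<^sub>C x) = a *\<^sub>C Rop g B x"
  unfolding Rop_def by (simp add: fr_S_scaleC[OF fr] scaleC_diff_right scaleC_scaleR_comm)

lemma R_scaleR: "Rop g B (r *\<^sub>R x) = r *\<^sub>R Rop g B x"
  by (simp add: scaleR_scaleC R_scaleC)

lemma R_herm: "cinner (Rop g B x) z = cnj (cinner (Rop g B z) x)"
  unfolding Rop_def
  by (simp add: cinner_diff_left cinner_scaleR_left fr_S_herm[OF fr, of x z] cinner_commute[of x z])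

lemma R_Re: "Re (cinner (Rop g B x) x) = (norm x)\<^sup>2 - (1/B) * Re (cinner (frame_op g x) x)"
  unfolding Rop_def by (simp add: cinner_diff_left cinner_scaleR_left cinner_self)

lemma R_pos: "Re (cinner (Rop g B x) x) \<ge> 0"
proof -
  have "(1/B) * Re (cinner (frame_op g x) x) \<le> (1/B) * (B * (norm x)\<^sup>2)"
    using fr_S_Re_up[OF fr, of x] fr_B[OF fr] by (intro mult_left_mono) auto
  then show ?thesis unfolding R_Re using fr_B[OF fr] by simp
qed

lemma R_up: "Re (cinner (Rop g B x) x) \<le> (1 - A/B) * (norm x)\<^sup>2"
proof -
  have "(1/B) * (A * (norm x)\<^sup>2) \<le> (1/B) * Re (cinner (frame_op g x) x)"
    using fr_S_Re_low[OF fr, of x] fr_B[OF fr] by (intro mult_left_mono) auto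
  then show ?thesis unfolding R_Re by (simp add: algebra_simps)
qed

lemma q_bounds: "0 \<le> 1 - A/B" "1 - A/B < 1"
  using fr_A[OF fr] fr_B[OF fr] fr_AB[OF fr] by auto

lemma R_contr: "norm (Rop g B x) \<le> (1 - A/B) * norm x"
proof -
  define q where "q = 1 - A/B"
  have q0: "q \<ge> 0" using q_bounds q_def by simp
  have "(cmod (cinner (Rop g B x) (Rop g B x)))\<^sup>2 \<le> Re (cinner (Rop g B x) x) * Re (cinner (Rop g B (Rop g B x)) (Rop g B x))"
    by (rule gen_CS[of "\<lambda>x z. cinner (Rop g B x) z"])
       (simp add: R_add cinner_add_left, simp add: R_scaleC cinner_scaleC_left, rule R_herm, rule R_pos)
  also have "\<dots> \<le> (q * (norm x)\<^sup>2) * (q * (norm (Rop g B x))\<^sup>2)"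
    by (intro mult_mono R_pos R_up[unfolded q_def[symmetric]]) (auto simp: q0)
  finally have c1: "(cmod (cinner (Rop g B x) (Rop g B x)))\<^sup>2 \<le> (q * (norm x)\<^sup>2) * (q * (norm (Rop g B x))\<^sup>2)" .
  have eq: "cmod (cinner (Rop g B x) (Rop g B x)) = (norm (Rop g B x))\<^sup>2"
    by (simp add: cinner_self norm_power)
  from c1 have *: "((norm (Rop g B x))\<^sup>2)\<^sup>2 \<le> (q * norm x)\<^sup>2 * (norm (Rop g B x))\<^sup>2"
    unfolding eq by (simp add: power_mult_distrib power2_eq_square mult_ac)
  show ?thesis
  proof (cases "norm (Rop g B x) = 0")
    case True then show ?thesis using q0 unfolding q_def by simp
  next
    case False
    then have pos: "(norm (Rop g B x))\<^sup>2 > 0" by simp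
    have **: "(norm (Rop g B x))\<^sup>2 * (norm (Rop g B x))\<^sup>2 \<le> (q * norm x)\<^sup>2 * (norm (Rop g B x))\<^sup>2"
      using * by (simp only: power2_eq_square[of "(norm (Rop g B x))\<^sup>2"])
    have "(norm (Rop g B x))\<^sup>2 \<le> (q * norm x)\<^sup>2" using ** pos by (rule mult_right_le_imp_le)
    then have "norm (Rop g B x) \<le> q * norm x"
      by (rule power2_le_imp_le) (simp add: q0)
    then show ?thesis by (simp add: q_def)
  qed
qed

lemma R_bl: "bounded_linear (Rop g B)"
proof (rule bounded_linear_intro[where K=1])
  show "Rop g B (x + y) = Rop g B x + Rop g B y" for x y by (rule R_add)
  show "Rop g B (r *\<^sub>R x) = r *\<^sub>R Rop g B x" for r x by (rule R_scaleR)
  show "norm (Rop g B x) \<le> norm x * 1" for x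
    using R_contr[of x] q_bounds mult_right_mono[of "1 - A/B" 1 "norm x"] by simp
qed

lemma R_pow: "norm ((Rop g B ^^ k) h) \<le> (1 - A/B)^k * norm h"
proof (induction k)
  case 0 then show ?case by simp
next
  case (Suc k)
  have "norm ((Rop g B ^^ Suc k) h) \<le> (1 - A/B) * norm ((Rop g B ^^ k) h)"
    by (simp add: R_contr)
  also have "\<dots> \<le> (1 - A/B) * ((1 - A/B)^k * norm h)"
    by (intro mult_left_mono Suc q_bounds)
  finally show ?case by (simp add: mult_ac)
qed

lemma fr_S_surj: "\<exists>u. frame_op g u = h"
proof -
  define v where "v = (\<Sum>k. (Rop g B ^^ k) h)"
  have sg: "summable (\<lambda>k. (1 - A/B)^k * norm h)"
    by (rule summable_mult2, rule summable_geometric) (use q_bounds in auto)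
  have sm: "summable (\<lambda>k. (Rop g B ^^ k) h)"
    by (rule summable_comparison_test'[OF sg]) (rule R_pow)
  have "Rop g B v = (\<Sum>k. Rop g B ((Rop g B ^^ k) h))"
    unfolding v_def by (rule bounded_linear.suminf[OF R_bl sm])
  also have "\<dots> = (\<Sum>k. (Rop g B ^^ Suc k) h)" by (simp only: funpow.simps comp_apply)
  also have "\<dots> = v - h" unfolding v_def using suminf_split_head[OF sm] by (simp only: funpow_0)
  finally have "v - (1/B) *\<^sub>R frame_op g v = v - h" unfolding Rop_def .
  then have "(1/B) *\<^sub>R frame_op g v = h" by simp
  then have "frame_op g ((1/B) *\<^sub>R v) = h" by (simp add: fr_S_scaleR[OF fr])
  then show ?thesis by (rule exI)
qed

lemma fr_dual: "frame_op g (canonical_dual g x) = g x"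
proof -
  obtain u where u: "frame_op g u = g x" using fr_S_surj[of "g x"] by blast
  have "\<exists>!y. frame_op g y = g x"
  proof (rule ex1I[of _ u])
    show "frame_op g u = g x" by (rule u)
    show "y = u" if "frame_op g y = g x" for y by (rule fr_S_inj[OF fr, OF trans[OF that u[symmetric]]])
  qed
  then show ?thesis unfolding canonical_dual_def by (rule theI')
qed

end



lemma finite_schur:
  fixes a :: "int \<Rightarrow> real" and G :: "int \<Rightarrow> int \<Rightarrow> real"
  assumes "finite X" and G0: "\<And>x y. G x y \<ge> 0"
    and row: "\<And>x. (\<Sum>y\<in>X. G x y) \<le> Gn" and col: "\<And>y. (\<Sum>x\<in>X. G x y) \<le> Gn"
  shows "(\<Sum>x\<in>X. \<Sum>y\<in>X. \<bar>a x\<bar> * \<bar>a y\<bar> * G x y) \<le> Gn * (\<Sum>x\<in>X. (a x)\<^sup>2)"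
proof -
  have "(\<Sum>x\<in>X. \<Sum>y\<in>X. \<bar>a x\<bar> * \<bar>a y\<bar> * G x y) \<le> (\<Sum>x\<in>X. \<Sum>y\<in>X. ((a x)\<^sup>2/2 + (a y)\<^sup>2/2) * G x y)"
  proof (intro sum_mono mult_right_mono G0)
    fix x y
    have "0 \<le> (\<bar>a x\<bar> - \<bar>a y\<bar>)\<^sup>2" by simp
    then show "\<bar>a x\<bar> * \<bar>a y\<bar> \<le> (a x)\<^sup>2/2 + (a y)\<^sup>2/2"
      by (simp add: power2_eq_square algebra_simps)
  qed
  also have "\<dots> = (\<Sum>x\<in>X. (a x)\<^sup>2/2 * (\<Sum>y\<in>X. G x y)) + (\<Sum>y\<in>X. (a y)\<^sup>2/2 * (\<Sum>x\<in>X. G x y))"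
  proof -
    have "(\<Sum>x\<in>X. \<Sum>y\<in>X. ((a x)\<^sup>2/2 + (a y)\<^sup>2/2) * G x y) =
          (\<Sum>x\<in>X. \<Sum>y\<in>X. (a x)\<^sup>2/2 * G x y) + (\<Sum>x\<in>X. \<Sum>y\<in>X. (a y)\<^sup>2/2 * G x y)"
      by (simp only: distrib_right sum.distrib)
    also have "(\<Sum>x\<in>X. \<Sum>y\<in>X. (a y)\<^sup>2/2 * G x y) = (\<Sum>y\<in>X. \<Sum>x\<in>X. (a y)\<^sup>2/2 * G x y)"
      by (rule sum.swap)
    finally show ?thesis by (simp only: sum_distrib_left)
  qed
  also have "\<dots> \<le> (\<Sum>x\<in>X. (a x)\<^sup>2/2 * Gn) + (\<Sum>y\<in>X. (a y)\<^sup>2/2 * Gn)"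
    by (intro add_mono sum_mono mult_left_mono row col) auto
  also have "\<dots> = Gn * (\<Sum>x\<in>X. (a x)\<^sup>2)"
    by (simp add: sum_distrib_left sum_distrib_right sum_divide_distrib[symmetric] algebra_simps)
  finally show ?thesis .
qed




lemma synth_bound:
  fixes g d D :: "int \<Rightarrow> 'a::chilbert" and c :: "int \<Rightarrow> complex"
  assumes fr: "frame g A0 B0"
    and dual: "\<And>x. frame_op g (D x) = g x"
    and Grow1: "\<And>x. (\<lambda>y. cmod (cinner (g x) (g y))) summable_on UNIV"
    and Grow2: "\<And>x. (\<Sum>\<^sub>\<infinity>y. cmod (cinner (g x) (g y))) \<le> Gn"
    and Gcol1: "\<And>y. (\<lambda>x. cmod (cinner (g x) (g y))) summable_on UNIV"
    and Gcol2: "\<And>y. (\<Sum>\<^sub>\<infinity>x. cmod (cinner (g x) (g y))) \<le> Gn"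
    and Mcol1: "\<And>n. (\<lambda>x. cmod (cinner (d n) (D x))) summable_on UNIV"
    and Mcol2: "\<And>n. (\<Sum>\<^sub>\<infinity>x. cmod (cinner (d n) (D x))) \<le> \<epsilon>"
    and Mrow1: "\<And>x. (\<lambda>n. cmod (cinner (d n) (D x))) summable_on UNIV"
    and Mrow2: "\<And>x. (\<Sum>\<^sub>\<infinity>n. cmod (cinner (d n) (D x))) \<le> \<epsilon>"
    and eps0: "\<epsilon> \<ge> 0" and finF: "finite F"
  shows "norm (\<Sum>n\<in>F. c n *\<^sub>C d n) \<le> sqrt Gn * \<epsilon> * sqrt (\<Sum>n\<in>F. (cmod (c n))\<^sup>2)"
proof -
  define h where "h = (\<Sum>n\<in>F. c n *\<^sub>C d n)"
  define M where "M x n = cinner (d n) (D x)" for x n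
  define a where "a x = cinner h (D x)" for x
  define C where "C = (\<Sum>n\<in>F. (cmod (c n))\<^sup>2)"
  have C0: "C \<ge> 0" unfolding C_def by (simp add: sum_nonneg)
  have Gn0: "Gn \<ge> 0"
    using Grow2[of 0] infsum_nonneg[of UNIV "\<lambda>y. cmod (cinner (g 0) (g y))"] by simp
  have a_eq: "a x = (\<Sum>n\<in>F. c n * M x n)" for x
    unfolding a_def h_def M_def by (simp add: cinner_sum_left cinner_scaleC_left)
  have rowF: "(\<Sum>n\<in>F. cmod (M x n)) \<le> \<epsilon>" for x
    using finite_sum_le_infsum[OF Mrow1[of x] finF] Mrow2[of x] unfolding M_def by simp
  have colX: "(\<Sum>x\<in>X. cmod (M x n)) \<le> \<epsilon>" if "finite X" for X n
    using finite_sum_le_infsum[OF Mcol1[of n] that] Mcol2[of n] unfolding M_def by simp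
  have a_sq: "(cmod (a x))\<^sup>2 \<le> \<epsilon> * (\<Sum>n\<in>F. (cmod (c n))\<^sup>2 * cmod (M x n))" for x
  proof -
    define f1 where "f1 n = sqrt (cmod (M x n))" for n
    define f2 where "f2 n = cmod (c n) * sqrt (cmod (M x n))" for n
    have "cmod (a x) \<le> (\<Sum>n\<in>F. cmod (c n * M x n))" unfolding a_eq by (rule norm_sum)
    also have "\<dots> = (\<Sum>n\<in>F. \<bar>f1 n\<bar> * \<bar>f2 n\<bar>)"
    proof (intro sum.cong refl)
      fix n
      have "\<bar>f1 n\<bar> * \<bar>f2 n\<bar> = cmod (c n) * (sqrt (cmod (M x n)) * sqrt (cmod (M x n)))"
        unfolding f1_def f2_def by (simp add: abs_mult)
      also have "\<dots> = cmod (c n * M x n)" by (simp add: norm_mult)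
      finally show "cmod (c n * M x n) = \<bar>f1 n\<bar> * \<bar>f2 n\<bar>" by simp
    qed
    also have "\<dots> \<le> L2_set f1 F * L2_set f2 F" by (rule L2_set_mult_ineq)
    finally have le: "cmod (a x) \<le> L2_set f1 F * L2_set f2 F" .
    have "(cmod (a x))\<^sup>2 \<le> (L2_set f1 F * L2_set f2 F)\<^sup>2"
      by (rule power_mono[OF le]) simp
    also have "\<dots> = (L2_set f1 F)\<^sup>2 * (L2_set f2 F)\<^sup>2" by (simp add: power_mult_distrib)
    also have "(L2_set f1 F)\<^sup>2 = (\<Sum>n\<in>F. cmod (M x n))"
      unfolding L2_set_def f1_def by (simp add: sum_nonneg)
    also have "(L2_set f2 F)\<^sup>2 = (\<Sum>n\<in>F. (cmod (c n))\<^sup>2 * cmod (M x n))"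
      unfolding L2_set_def f2_def by (simp add: sum_nonneg power_mult_distrib)
    also have "(\<Sum>n\<in>F. cmod (M x n)) * (\<Sum>n\<in>F. (cmod (c n))\<^sup>2 * cmod (M x n)) \<le> \<epsilon> * (\<Sum>n\<in>F. (cmod (c n))\<^sup>2 * cmod (M x n))"
      by (intro mult_right_mono rowF sum_nonneg) simp
    finally show ?thesis .
  qed
  have S1: "(\<Sum>x\<in>X. (cmod (a x))\<^sup>2) \<le> \<epsilon>\<^sup>2 * C" if "finite X" for X
  proof -
    have "(\<Sum>x\<in>X. (cmod (a x))\<^sup>2) \<le> (\<Sum>x\<in>X. \<epsilon> * (\<Sum>n\<in>F. (cmod (c n))\<^sup>2 * cmod (M x n)))"
      by (intro sum_mono a_sq)
    also have "\<dots> = \<epsilon> * (\<Sum>n\<in>F. (cmod (c n))\<^sup>2 * (\<Sum>x\<in>X. cmod (M x n)))"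
      by (simp add: sum_distrib_left sum.swap[of _ X F])
    also have "\<dots> \<le> \<epsilon> * (\<Sum>n\<in>F. (cmod (c n))\<^sup>2 * \<epsilon>)"
      by (intro mult_left_mono eps0 sum_mono colX that) simp
    also have "\<dots> = \<epsilon>\<^sup>2 * C" unfolding C_def by (simp add: sum_distrib_right power2_eq_square mult_ac sum_distrib_left)
    finally show ?thesis .
  qed
  obtain u where u: "frame_op g u = h" using fr_S_surj[OF fr] by blast
  have a_u: "a x = cinner u (g x)" for x
  proof -
    have "a x = cinner (frame_op g u) (D x)" unfolding a_def u ..
    also have "\<dots> = cnj (cinner (frame_op g (D x)) u)" by (rule fr_S_herm[OF fr])
    also have "\<dots> = cinner u (g x)" unfolding dual by (rule cinner_commute[symmetric])
    finally show ?thesis .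
  qed
  have hs: "((\<lambda>x. a x *\<^sub>C g x) has_sum h) UNIV"
    using fr_S_has_sum[OF fr, of u] unfolding u a_u .
  have S4: "(norm (\<Sum>x\<in>X. a x *\<^sub>C g x))\<^sup>2 \<le> Gn * (\<Sum>x\<in>X. (cmod (a x))\<^sup>2)" if finX: "finite X" for X
  proof -
    define v where "v = (\<Sum>x\<in>X. a x *\<^sub>C g x)"
    have "cinner v v = (\<Sum>x\<in>X. \<Sum>y\<in>X. a x * cnj (a y) * cinner (g x) (g y))"
      unfolding v_def by (simp add: cinner_sum_left cinner_sum_right cinner_scaleC_left cinner_scaleC_right sum_distrib_left mult_ac) (rule sum.swap)
    then have "(norm v)\<^sup>2 = Re (\<Sum>x\<in>X. \<Sum>y\<in>X. a x * cnj (a y) * cinner (g x) (g y))"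
      using cinner_self_Re[of v] by (simp only:)
    also have "\<dots> \<le> cmod (\<Sum>x\<in>X. \<Sum>y\<in>X. a x * cnj (a y) * cinner (g x) (g y))"
      by (rule complex_Re_le_cmod)
    also have "\<dots> \<le> (\<Sum>x\<in>X. \<Sum>y\<in>X. \<bar>cmod (a x)\<bar> * \<bar>cmod (a y)\<bar> * cmod (cinner (g x) (g y)))"
    proof -
      have "cmod (\<Sum>x\<in>X. \<Sum>y\<in>X. a x * cnj (a y) * cinner (g x) (g y)) \<le> (\<Sum>x\<in>X. cmod (\<Sum>y\<in>X. a x * cnj (a y) * cinner (g x) (g y)))"
        by (rule norm_sum)
      also have "\<dots> \<le> (\<Sum>x\<in>X. \<Sum>y\<in>X. cmod (a x * cnj (a y) * cinner (g x) (g y)))"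
        by (intro sum_mono norm_sum)
      finally show ?thesis by (simp add: norm_mult)
    qed
    also have "\<dots> \<le> Gn * (\<Sum>x\<in>X. (cmod (a x))\<^sup>2)"
    proof (rule finite_schur[OF finX, of "\<lambda>x y. cmod (cinner (g x) (g y))" Gn "\<lambda>x. cmod (a x)"])
      show "0 \<le> cmod (cinner (g x) (g y))" for x y by simp
      show "(\<Sum>y\<in>X. cmod (cinner (g x) (g y))) \<le> Gn" for x
        using finite_sum_le_infsum[OF Grow1[of x] finX] Grow2[of x] by simp
      show "(\<Sum>x\<in>X. cmod (cinner (g x) (g y))) \<le> Gn" for y
        using finite_sum_le_infsum[OF Gcol1[of y] finX] Gcol2[of y] by simp
    qed
    finally show ?thesis unfolding v_def .
  qed
  have bndX: "norm (\<Sum>x\<in>X. a x *\<^sub>C g x) \<le> sqrt Gn * \<epsilon> * sqrt C" if finX: "finite X" for X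
  proof -
    have "(norm (\<Sum>x\<in>X. a x *\<^sub>C g x))\<^sup>2 \<le> Gn * (\<epsilon>\<^sup>2 * C)"
      using S4[OF finX] mult_left_mono[OF S1[OF finX] Gn0] by linarith
    then have "sqrt ((norm (\<Sum>x\<in>X. a x *\<^sub>C g x))\<^sup>2) \<le> sqrt (Gn * (\<epsilon>\<^sup>2 * C))"
      by (rule real_sqrt_le_mono)
    then show ?thesis using eps0 by (simp add: real_sqrt_mult mult_ac)
  qed
  have lim: "((\<lambda>X. norm (\<Sum>x\<in>X. a x *\<^sub>C g x)) \<longlongrightarrow> norm h) (finite_subsets_at_top UNIV)"
    using hs unfolding has_sum_def by (rule tendsto_norm)
  have "norm h \<le> sqrt Gn * \<epsilon> * sqrt C"
    by (rule tendsto_upperbound[OF lim]) (auto intro: bndX)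
  then show ?thesis unfolding h_def C_def .
qed




lemma L2_le_infsum:
  fixes u :: "int \<Rightarrow> real"
  assumes "(\<lambda>n. (u n)\<^sup>2) summable_on UNIV" "finite F"
  shows "L2_set u F \<le> sqrt (\<Sum>\<^sub>\<infinity>n. (u n)\<^sup>2)"
  unfolding L2_set_def
  by (rule real_sqrt_le_mono, rule finite_sum_le_infsum[OF assms]) auto

lemma infsum_sq_le:
  fixes u :: "int \<Rightarrow> real"
  assumes "(\<lambda>n. (u n)\<^sup>2) summable_on UNIV" "\<And>F. finite F \<Longrightarrow> L2_set u F \<le> b"
  shows "(\<Sum>\<^sub>\<infinity>n. (u n)\<^sup>2) \<le> b\<^sup>2"
proof (rule infsum_le_finite_sums[OF assms(1)])
  fix F :: "int set" assume "finite F"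
  have "(\<Sum>n\<in>F. (u n)\<^sup>2) = (L2_set u F)\<^sup>2" unfolding L2_set_def by (simp add: sum_nonneg)
  also have "\<dots> \<le> b\<^sup>2" using assms(2)[OF \<open>finite F\<close>] by (intro power_mono) auto
  finally show "(\<Sum>n\<in>F. (u n)\<^sup>2) \<le> b\<^sup>2" .
qed

lemma sq_summable_bdd:
  fixes u :: "int \<Rightarrow> real"
  assumes "\<And>F. finite F \<Longrightarrow> (\<Sum>n\<in>F. (u n)\<^sup>2) \<le> b"
  shows "(\<lambda>n. (u n)\<^sup>2) summable_on UNIV"
  by (rule nonneg_bdd_above_summable_on) (use assms in \<open>auto intro!: bdd_aboveI[of _ b]\<close>)

lemma analysis_from_synth:
  fixes d :: "int \<Rightarrow> 'a::chilbert"
  assumes syn: "\<And>F c. finite F \<Longrightarrow> norm (\<Sum>n\<in>F. c n *\<^sub>C d n) \<le> K * sqrt (\<Sum>n\<in>F. (cmod (c n))\<^sup>2)"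
    and finF: "finite F"
  shows "(\<Sum>n\<in>F. (cmod (cinner y (d n)))\<^sup>2) \<le> (K * norm y)\<^sup>2"
proof -
  define c where "c n = cinner y (d n)" for n
  define s where "s = (\<Sum>n\<in>F. (cmod (c n))\<^sup>2)"
  have s0: "s \<ge> 0" unfolding s_def by (simp add: sum_nonneg)
  have "cinner y (\<Sum>n\<in>F. c n *\<^sub>C d n) = (\<Sum>n\<in>F. cnj (c n) * c n)"
    by (simp add: cinner_sum_right cinner_scaleC_right c_def)
  also have "\<dots> = of_real s" unfolding s_def of_real_sum complex_norm_square
    by (simp only: mult.commute)
  finally have "s = cmod (cinner y (\<Sum>n\<in>F. c n *\<^sub>C d n))" using s0 by simp
  also have "\<dots> \<le> norm y * norm (\<Sum>n\<in>F. c n *\<^sub>C d n)" by (rule CS)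
  also have "\<dots> \<le> norm y * (K * sqrt s)" unfolding s_def by (intro mult_left_mono syn finF) simp
  finally have *: "sqrt s * sqrt s \<le> (K * norm y) * sqrt s" using s0 by (simp add: mult_ac)
  show ?thesis
  proof (cases "s = 0")
    case True
    then show ?thesis unfolding s_def[symmetric] c_def[symmetric] by simp
  next
    case False
    then have "sqrt s > 0" using s0 by simp
    then have "sqrt s \<le> K * norm y" using * by (rule mult_right_le_imp_le[rotated])
    then have "(sqrt s)\<^sup>2 \<le> (K * norm y)\<^sup>2" by (intro power_mono) (use \<open>sqrt s > 0\<close> in auto)
    then show ?thesis using s0 unfolding s_def c_def by simp
  qed
qed




lemma frame_perturb:
  fixes f e :: "int \<Rightarrow> 'a::chilbert"
  assumes frf: "frame f A B" and K0: "K \<ge> 0" and KA: "K < sqrt A"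
    and syn: "\<And>F c. finite F \<Longrightarrow> norm (\<Sum>n\<in>F. c n *\<^sub>C (e n - f n)) \<le> K * sqrt (\<Sum>n\<in>F. (cmod (c n))\<^sup>2)"
  shows "is_frame e"
proof -
  define d where "d n = e n - f n" for n
  have syn': "\<And>F c. finite F \<Longrightarrow> norm (\<Sum>n\<in>F. c n *\<^sub>C d n) \<le> K * sqrt (\<Sum>n\<in>F. (cmod (c n))\<^sup>2)"
    unfolding d_def by (rule syn)
  have A0: "A > 0" and AB: "A \<le> B" using fr_A[OF frf] fr_AB[OF frf] by auto
  have key: "(\<lambda>n. (cmod (cinner y (e n)))\<^sup>2) summable_on UNIV \<and>
     (sqrt A - K)\<^sup>2 * (norm y)\<^sup>2 \<le> (\<Sum>\<^sub>\<infinity>n. (cmod (cinner y (e n)))\<^sup>2) \<and>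
     (\<Sum>\<^sub>\<infinity>n. (cmod (cinner y (e n)))\<^sup>2) \<le> (sqrt B + K)\<^sup>2 * (norm y)\<^sup>2" for y
  proof -
    define a where "a n = cmod (cinner y (f n))" for n
    define b where "b n = cmod (cinner y (d n))" for n
    define s where "s n = cmod (cinner y (e n))" for n
    have sab: "s n \<le> a n + b n" for n
    proof -
      have "cinner y (e n) = cinner y (f n) + cinner y (d n)" unfolding d_def by (simp add: cinner_add_right[symmetric])
      then show ?thesis unfolding s_def a_def b_def by (simp add: norm_triangle_ineq)
    qed
    have asb: "a n \<le> s n + b n" for n
    proof -
      have "cinner y (f n) = cinner y (e n) - cinner y (d n)" unfolding d_def by (simp add: cinner_diff_right)
      then show ?thesis unfolding s_def a_def b_def by (simp add: norm_triangle_ineq4)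
    qed
    have a_sum: "(\<lambda>n. (a n)\<^sup>2) summable_on UNIV" unfolding a_def by (rule fr_summ[OF frf])
    have a_low: "A * (norm y)\<^sup>2 \<le> (\<Sum>\<^sub>\<infinity>n. (a n)\<^sup>2)" unfolding a_def by (rule fr_low[OF frf])
    have a_up: "(\<Sum>\<^sub>\<infinity>n. (a n)\<^sup>2) \<le> B * (norm y)\<^sup>2" unfolding a_def by (rule fr_up[OF frf])
    have bF: "(\<Sum>n\<in>F. (b n)\<^sup>2) \<le> (K * norm y)\<^sup>2" if "finite F" for F
      unfolding b_def by (rule analysis_from_synth[OF syn' that])
    have b_L2: "L2_set b F \<le> K * norm y" if "finite F" for F
    proof -
      have "L2_set b F \<le> sqrt ((K * norm y)\<^sup>2)" unfolding L2_set_def by (rule real_sqrt_le_mono, rule bF[OF that])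
      then show ?thesis using K0 by simp
    qed
    have a_L2: "L2_set a F \<le> sqrt B * norm y" if "finite F" for F
    proof -
      have "L2_set a F \<le> sqrt (\<Sum>\<^sub>\<infinity>n. (a n)\<^sup>2)" by (rule L2_le_infsum[OF a_sum that])
      also have "\<dots> \<le> sqrt (B * (norm y)\<^sup>2)" by (rule real_sqrt_le_mono[OF a_up])
      also have "\<dots> = sqrt B * norm y" by (simp add: real_sqrt_mult)
      finally show ?thesis .
    qed
    have s_L2: "L2_set s F \<le> sqrt B * norm y + K * norm y" if "finite F" for F
    proof -
      have "L2_set s F \<le> L2_set (\<lambda>n. a n + b n) F"
        by (rule L2_set_mono[OF sab]) (simp add: s_def)
      also have "\<dots> \<le> L2_set a F + L2_set b F" by (rule L2_set_triangle_ineq)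
      also have "\<dots> \<le> sqrt B * norm y + K * norm y" by (intro add_mono a_L2 b_L2 that)
      finally show ?thesis .
    qed
    have s_sum: "(\<lambda>n. (s n)\<^sup>2) summable_on UNIV"
    proof (rule sq_summable_bdd)
      fix F :: "int set" assume "finite F"
      have "(\<Sum>n\<in>F. (s n)\<^sup>2) = (L2_set s F)\<^sup>2" unfolding L2_set_def by (simp add: sum_nonneg)
      also have "\<dots> \<le> (sqrt B * norm y + K * norm y)\<^sup>2" using s_L2[OF \<open>finite F\<close>] by (intro power_mono) auto
      finally show "(\<Sum>n\<in>F. (s n)\<^sup>2) \<le> (sqrt B * norm y + K * norm y)\<^sup>2" .
    qed
    have s_up: "(\<Sum>\<^sub>\<infinity>n. (s n)\<^sup>2) \<le> (sqrt B + K)\<^sup>2 * (norm y)\<^sup>2"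
    proof -
      have "sqrt B * norm y + K * norm y = (sqrt B + K) * norm y" by (simp add: distrib_right)
      then show ?thesis using infsum_sq_le[OF s_sum s_L2] by (simp add: power_mult_distrib)
    qed
    define T where "T = sqrt (\<Sum>\<^sub>\<infinity>n. (s n)\<^sup>2)"
    have T0: "T \<ge> 0" unfolding T_def by (simp add: infsum_nonneg)
    have a_L2': "L2_set a F \<le> T + K * norm y" if "finite F" for F
    proof -
      have "L2_set a F \<le> L2_set (\<lambda>n. s n + b n) F"
        by (rule L2_set_mono[OF asb]) (simp add: a_def)
      also have "\<dots> \<le> L2_set s F + L2_set b F" by (rule L2_set_triangle_ineq)
      also have "\<dots> \<le> T + K * norm y" unfolding T_def by (intro add_mono L2_le_infsum[OF s_sum that] b_L2 that)
      finally show ?thesis .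
    qed
    have "A * (norm y)\<^sup>2 \<le> (T + K * norm y)\<^sup>2"
      using a_low infsum_sq_le[OF a_sum a_L2'] by linarith
    then have "sqrt (A * (norm y)\<^sup>2) \<le> sqrt ((T + K * norm y)\<^sup>2)" by (rule real_sqrt_le_mono)
    then have "sqrt A * norm y \<le> T + K * norm y" using T0 K0 by (simp add: real_sqrt_mult)
    then have "(sqrt A - K) * norm y \<le> T" by (simp add: algebra_simps)
    then have "((sqrt A - K) * norm y)\<^sup>2 \<le> T\<^sup>2" using KA by (intro power_mono) auto
    then have s_low: "(sqrt A - K)\<^sup>2 * (norm y)\<^sup>2 \<le> (\<Sum>\<^sub>\<infinity>n. (s n)\<^sup>2)"
      unfolding T_def by (simp add: power_mult_distrib infsum_nonneg)
    show ?thesis using s_sum s_low s_up unfolding s_def by simp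
  qed
  have "frame e ((sqrt A - K)\<^sup>2) ((sqrt B + K)\<^sup>2)"
    unfolding frame_def
  proof (intro conjI allI)
    show "0 < (sqrt A - K)\<^sup>2" using KA by simp
    have "sqrt A \<le> sqrt B" using AB by simp
    then show "(sqrt A - K)\<^sup>2 \<le> (sqrt B + K)\<^sup>2" using KA K0 by (intro power_mono) linarith+
  qed (use key in auto)
  then show ?thesis unfolding is_frame_def by blast
qed




lemma nonneg_comparison:
  fixes f g :: "'i \<Rightarrow> real"
  assumes "g summable_on A" "\<And>x. 0 \<le> f x" "\<And>x. f x \<le> g x"
  shows "f summable_on A" "infsum f A \<le> infsum g A"
proof -
  have g0: "0 \<le> g x" for x using assms(2,3) order_trans by blast
  have eg: "(\<lambda>x. norm (g x)) = g" using g0 by (simp add: fun_eq_iff)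
  have ef: "(\<lambda>x. norm (f x)) = f" using assms(2) by (simp add: fun_eq_iff)
  have "(\<lambda>x. norm (f x)) summable_on A"
  proof (rule Infinite_Sum.abs_summable_on_comparison_test[of g A f])
    show "(\<lambda>x. norm (g x)) summable_on A" unfolding eg by (rule assms(1))
    show "norm (f x) \<le> norm (g x)" for x using assms(2,3)[of x] g0[of x] by simp
  qed
  then show fs: "f summable_on A" unfolding ef .
  show "infsum f A \<le> infsum g A" by (rule infsum_mono[OF fs assms(1) assms(3)])
qed

lemma weight0: "weight 0 k = 1"
  unfolding weight_def by simp

lemma weight_ge1: "s \<ge> 0 \<Longrightarrow> weight s k \<ge> 1"
  unfolding weight_def by (rule ge_one_powr_ge_zero) auto

lemma schur_facts:
  assumes "in_schur s M" "s \<ge> 0"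
  shows "\<And>k. (\<lambda>l. cmod (M k l)) summable_on UNIV"
    and "\<And>l. (\<lambda>k. cmod (M k l)) summable_on UNIV"
    and "\<And>k. (\<Sum>\<^sub>\<infinity>l. cmod (M k l)) \<le> schur_norm 0 M"
    and "\<And>l. (\<Sum>\<^sub>\<infinity>k. cmod (M k l)) \<le> schur_norm 0 M"
proof -
  have r1: "(\<lambda>l. cmod (M k l) * weight s (k - l)) summable_on UNIV" for k
    using assms(1) unfolding in_schur_def by blast
  have c1: "(\<lambda>k. cmod (M k l) * weight s (k - l)) summable_on UNIV" for l
    using assms(1) unfolding in_schur_def by blast
  obtain U1 where U1: "\<And>k. (\<Sum>\<^sub>\<infinity>l. cmod (M k l) * weight s (k - l)) \<le> U1"
    using assms(1) unfolding in_schur_def bdd_above_def by blast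
  obtain U2 where U2: "\<And>l. (\<Sum>\<^sub>\<infinity>k. cmod (M k l) * weight s (k - l)) \<le> U2"
    using assms(1) unfolding in_schur_def bdd_above_def by blast
  have le1: "cmod (M k l) \<le> cmod (M k l) * weight s (k - l)" for k l
    using weight_ge1[OF assms(2), of "k - l"] by (simp add: mult_le_cancel_left1)
  note rc = nonneg_comparison[OF r1 _ le1] 
  note cc = nonneg_comparison[OF c1 _ le1] 
  show rs: "(\<lambda>l. cmod (M k l)) summable_on UNIV" for k using rc by simp
  show cs: "(\<lambda>k. cmod (M k l)) summable_on UNIV" for l using cc by simp
  have rowU: "(\<Sum>\<^sub>\<infinity>l. cmod (M k l) * weight 0 (k - l)) \<le> U1" for k
    using rc(2)[of k] U1[of k] by (simp add: weight0)
  have colU: "(\<Sum>\<^sub>\<infinity>k. cmod (M k l) * weight 0 (k - l)) \<le> U2" for l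
    using cc(2)[of l] U2[of l] by (simp add: weight0)
  show "(\<Sum>\<^sub>\<infinity>l. cmod (M k l)) \<le> schur_norm 0 M" for k
  proof -
    have "(\<Sum>\<^sub>\<infinity>l. cmod (M k l) * weight 0 (k - l)) \<le> (SUP k. \<Sum>\<^sub>\<infinity>l. cmod (M k l) * weight 0 (k - l))"
      by (rule cSUP_upper) (auto intro!: bdd_aboveI2[of _ _ U1] rowU)
    then show ?thesis unfolding schur_norm_def by (simp add: weight0)
  qed
  show "(\<Sum>\<^sub>\<infinity>k. cmod (M k l)) \<le> schur_norm 0 M" for l
  proof -
    have "(\<Sum>\<^sub>\<infinity>k. cmod (M k l) * weight 0 (k - l)) \<le> (SUP l. \<Sum>\<^sub>\<infinity>k. cmod (M k l) * weight 0 (k - l))"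
      by (rule cSUP_upper) (auto intro!: bdd_aboveI2[of _ _ U2] colU)
    then show ?thesis unfolding schur_norm_def by (simp add: weight0)
  qed
qed




theorem mainTheorem3:
  fixes g f e :: "int \<Rightarrow> 'a::chilbert"
    and s A \<epsilon> :: real
    and \<epsilon>n :: "int \<Rightarrow> real"
  assumes s_pos: "s > 0"
    and G_frame: "is_frame g"
    and G_loc: "in_schur s (gramian g)"
    and F_frame: "\<exists>B. frame f A B"
    and E_close: "\<And>n p. 1 \<le> p \<Longrightarrow> Hp_norm_le g p (e n - f n) (\<epsilon>n n)"
    and E_close_inf: "\<And>n. Hinf_norm g (e n - f n) \<le> \<epsilon>n n"
    and eps_sup: "\<And>n. \<epsilon>n n \<le> \<epsilon>"
  defines "cond_i \<equiv> (\<lambda>n. Hinf_norm g (e n - f n)) summable_on UNIV \<and>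
                      (\<Sum>\<^sub>\<infinity>n. Hinf_norm g (e n - f n)) \<le> \<epsilon>"
    and "cond_ii \<equiv> (\<forall>x. (\<lambda>n. cmod (cinner (e n - f n) (canonical_dual g x))) summable_on UNIV \<and>
                      (\<Sum>\<^sub>\<infinity>n. cmod (cinner (e n - f n) (canonical_dual g x))) \<le> \<epsilon>)"
    and "cond_iii \<equiv> (\<forall>F c. finite F \<longrightarrow>
                      norm (\<Sum>n\<in>F. c n *\<^sub>C (e n - f n))
                        \<le> sqrt (schur_norm 0 (gramian g)) * \<epsilon> * sqrt (\<Sum>n\<in>F. (cmod (c n))\<^sup>2))"
  shows "(cond_i \<longrightarrow> cond_ii) \<and> (cond_ii \<longrightarrow> cond_iii) \<and>
         (\<epsilon> > 0 \<and> sqrt (schur_norm 0 (gramian g)) * \<epsilon> < sqrt A \<and>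
          (cond_i \<or> cond_ii \<or> cond_iii) \<longrightarrow> is_frame e)"
proof -
  note ci_def = assms(8) and cii_def = assms(9) and ciii_def = assms(10)
  obtain A0 B0 where frg: "frame g A0 B0" using G_frame unfolding is_frame_def by blast
  define D where "D = canonical_dual g"
  have dual: "frame_op g (D x) = g x" for x unfolding D_def by (rule fr_dual[OF frg])
  define Gn where "Gn = schur_norm 0 (gramian g)"
  note sf = schur_facts[OF G_loc less_imp_le[OF s_pos]]
  have Grow1: "(\<lambda>y. cmod (cinner (g x) (g y))) summable_on UNIV" for x
    using sf(1)[of x] unfolding gramian_def .
  have Gcol1: "(\<lambda>x. cmod (cinner (g x) (g y))) summable_on UNIV" for y
    using sf(2)[of y] unfolding gramian_def .
  have Grow2: "(\<Sum>\<^sub>\<infinity>y. cmod (cinner (g x) (g y))) \<le> Gn" for x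
    using sf(3)[of x] unfolding gramian_def Gn_def .
  have Gcol2: "(\<Sum>\<^sub>\<infinity>x. cmod (cinner (g x) (g y))) \<le> Gn" for y
    using sf(4)[of y] unfolding gramian_def Gn_def .
  have Gn0: "Gn \<ge> 0"
    using Grow2[of 0] infsum_nonneg[of UNIV "\<lambda>y. cmod (cinner (g 0) (g y))"] by simp
  have Mcol1: "(\<lambda>x. cmod (cinner (e n - f n) (D x))) summable_on UNIV"
   and Mcol2': "(\<Sum>\<^sub>\<infinity>x. cmod (cinner (e n - f n) (D x))) \<le> \<epsilon>n n" for n
  proof -
    have h: "Hp_norm_le g 1 (e n - f n) (\<epsilon>n n)" by (rule E_close) simp
    then show "(\<lambda>x. cmod (cinner (e n - f n) (D x))) summable_on UNIV"
      unfolding Hp_norm_le_def D_def by simp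
    from h have "\<bar>\<Sum>\<^sub>\<infinity>x. cmod (cinner (e n - f n) (D x))\<bar> \<le> \<epsilon>n n"
      unfolding Hp_norm_le_def D_def by simp
    then show "(\<Sum>\<^sub>\<infinity>x. cmod (cinner (e n - f n) (D x))) \<le> \<epsilon>n n" by simp
  qed
  have epsn0: "\<epsilon>n n \<ge> 0" for n
    using Mcol2'[of n] infsum_nonneg[of UNIV "\<lambda>x. cmod (cinner (e n - f n) (D x))"] by simp
  have eps0: "\<epsilon> \<ge> 0" using epsn0[of 0] eps_sup[of 0] by simp
  have Mcol2: "(\<Sum>\<^sub>\<infinity>x. cmod (cinner (e n - f n) (D x))) \<le> \<epsilon>" for n
    using Mcol2'[of n] eps_sup[of n] by simp
  have Mpt: "cmod (cinner (e n - f n) (D x)) \<le> \<epsilon>n n" for n x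
  proof -
    have "(\<Sum>y\<in>{x}. cmod (cinner (e n - f n) (D y))) \<le> (\<Sum>\<^sub>\<infinity>y. cmod (cinner (e n - f n) (D y)))"
      by (rule finite_sum_le_infsum[OF Mcol1]) auto
    then show ?thesis using Mcol2'[of n] by simp
  qed
  have Mhinf: "cmod (cinner (e n - f n) (D x)) \<le> Hinf_norm g (e n - f n)" for n x
    unfolding Hinf_norm_def D_def[symmetric]
    by (rule cSUP_upper) (auto intro!: bdd_aboveI2[of _ _ "\<epsilon>n n"] Mpt)
  have i_ii: "cond_ii" if "cond_i"
  proof -
    have s: "(\<lambda>n. Hinf_norm g (e n - f n)) summable_on UNIV" and b: "(\<Sum>\<^sub>\<infinity>n. Hinf_norm g (e n - f n)) \<le> \<epsilon>"
      using that unfolding ci_def by auto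
    note nc = nonneg_comparison[OF s _ Mhinf]
    show ?thesis unfolding cii_def D_def[symmetric]
    proof (intro allI conjI)
      fix x
      show "(\<lambda>n. cmod (cinner (e n - f n) (D x))) summable_on UNIV" using nc(1) by simp
      show "(\<Sum>\<^sub>\<infinity>n. cmod (cinner (e n - f n) (D x))) \<le> \<epsilon>" using order_trans[OF nc(2) b] by simp
    qed
  qed
  have ii_iii: "cond_iii" if "cond_ii"
  proof -
    have Mrow1: "(\<lambda>n. cmod (cinner (e n - f n) (D x))) summable_on UNIV"
      and Mrow2: "(\<Sum>\<^sub>\<infinity>n. cmod (cinner (e n - f n) (D x))) \<le> \<epsilon>" for x
      using that unfolding cii_def D_def by auto
    show ?thesis unfolding ciii_def Gn_def[symmetric]
    proof (intro allI impI)
      fix F :: "int set" and c :: "int \<Rightarrow> complex"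
      assume "finite F"
      show "norm (\<Sum>n\<in>F. c n *\<^sub>C (e n - f n)) \<le> sqrt Gn * \<epsilon> * sqrt (\<Sum>n\<in>F. (cmod (c n))\<^sup>2)"
        by (rule synth_bound[OF frg dual Grow1 Grow2 Gcol1 Gcol2 Mcol1 Mcol2 Mrow1 Mrow2 eps0 \<open>finite F\<close>])
    qed
  qed
  have fr_e: "is_frame e" if "\<epsilon> > 0" "sqrt Gn * \<epsilon> < sqrt A" "cond_i \<or> cond_ii \<or> cond_iii"
  proof -
    have c3: cond_iii using that(3) i_ii ii_iii by blast
    obtain B where frf: "frame f A B" using F_frame by blast
    show ?thesis
    proof (rule frame_perturb[OF frf _ that(2)])
      show "0 \<le> sqrt Gn * \<epsilon>" using Gn0 eps0 by simp
      show "norm (\<Sum>n\<in>F. c n *\<^sub>C (e n - f n)) \<le> sqrt Gn * \<epsilon> * sqrt (\<Sum>n\<in>F. (cmod (c n))\<^sup>2)"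
        if "finite F" for F c using c3 that unfolding ciii_def Gn_def by blast
    qed
  qed
  show ?thesis using i_ii ii_iii fr_e unfolding Gn_def by blast
qed


end
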